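(* Let $0<r\le 1/2$, $0\le\rho\le 1$, and let $\alpha$ satisfy $0\le\alpha<r$, with $\alpha$ the asymptotic red edge fraction of the Biased Preferential Attachment Model described in the context. Define $$K_B=\frac12\left(\frac{r\rho}{\alpha+\rho(1-\alpha)}+\frac{1-r}{\alpha\rho+1-\alpha}\right),\qquad \beta_B=1+\frac{1}{K_B}.$$ Then $\beta_B>2$.
   Context: In the BPAM, nodes arrive sequentially and are labeled red with probability $r$ (minority, $0<r\le1/2$) or blue with probability $1-r$. Each new node attaches by preferential attachment, with a cross-label edge accepted only with probability $\rho\in[0,1]$ (retrying otherwise), and every node has outdegree $d$. $\alpha$ denotes the limit as $N\to\infty$ of the expected fraction of the total degree $2Nd$ belonging to red nodes. It satisfies the power inequality $\alpha<r$. $\beta_B$ is the power-law exponent of the blue community's asymptotic degree distribution, i.e. the number of blue nodes of degree at least $k$ scales as $k^{-\beta_B}$. *)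

theory Defs
  imports Complex_Main
begin

definition K_B :: "real \<Rightarrow> real \<Rightarrow> real \<Rightarrow> real" where
  "K_B r \<rho> \<alpha> = (1/2) * (r * \<rho> / (\<alpha> + \<rho> * (1 - \<alpha>)) + (1 - r) / (\<alpha> * \<rho> + 1 - \<alpha>))"

definition beta_B :: "real \<Rightarrow> real \<Rightarrow> real \<Rightarrow> real" where
  "beta_B r \<rho> \<alpha> = 1 + 1 / K_B r \<rho> \<alpha>"

end

theory Submission
  imports Defs
begin

theorem proposition4:
  fixes r \<rho> \<alpha> :: real
  assumes "0 < r" and "r \<le> 1/2"
    and "0 \<le> \<rho>" and "\<rho> \<le> 1"
    and "0 \<le> \<alpha>" and "\<alpha> < r"
  shows "beta_B r \<rho> \<alpha> > 2"
proof -
  define D1 where "D1 = \<alpha> + \<rho> * (1 - \<alpha>)"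
  define D2 where "D2 = \<alpha> * \<rho> + 1 - \<alpha>"
  have a1: "\<alpha> < 1" using assms by linarith
  have D2a: "D2 \<ge> 1 - \<alpha>" unfolding D2_def using assms by (simp add: mult_nonneg_nonneg)
  have D2p: "D2 > 0" using D2a a1 by linarith
  have t1: "\<rho> / D1 \<le> 1"
  proof (cases "D1 = 0")
    case False
    have "\<rho> \<le> D1" unfolding D1_def using assms
      by (simp add: algebra_simps mult_left_le)
    moreover have "D1 > 0" using False assms a1 unfolding D1_def
      by (smt (verit) mult_nonneg_nonneg mult_pos_pos)
    ultimately show ?thesis by simp
  qed simp
  have t1p: "\<rho> / D1 \<ge> 0" unfolding D1_def using assms a1 by (simp add: mult_nonneg_nonneg)
  have t2: "(1 - r) / D2 \<le> (1 - r) / (1 - \<alpha>)"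
    using D2a a1 assms by (intro divide_left_mono) auto
  have t3: "(1 - r) / (1 - \<alpha>) < 1" using a1 assms by simp
  have t2p: "(1 - r) / D2 > 0" using D2p assms by simp
  have K: "K_B r \<rho> \<alpha> = (1/2) * (r * (\<rho> / D1) + (1 - r) / D2)"
    unfolding K_B_def D1_def D2_def by simp
  have r1: "r * (\<rho> / D1) \<le> r" using t1 assms mult_left_le[of "\<rho> / D1" r] by linarith
  have r0: "r * (\<rho> / D1) \<ge> 0" using t1p assms by (simp only: mult_nonneg_nonneg less_imp_le)
  define A where "A = r * (\<rho> / D1)"
  define B where "B = (1 - r) / D2"
  define C where "C = (1 - r) / (1 - \<alpha>)"
  have K': "K_B r \<rho> \<alpha> = (1/2) * (A + B)" unfolding K A_def B_def ..
  have Kp: "K_B r \<rho> \<alpha> > 0" unfolding K' using r0 t2p A_def B_def by simp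
  have Kl: "K_B r \<rho> \<alpha> < 1" unfolding K' using r1 t2 t3 assms
    unfolding A_def[symmetric] B_def[symmetric] C_def[symmetric] by simp
  have "1 / K_B r \<rho> \<alpha> > 1" using Kp Kl by simp
  thus ?thesis unfolding beta_B_def by simp
qed

end
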